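(* Let $f\colon\mathbb{R}^d\to\mathbb{R}\cup\{+\infty\}$ be $\rho$-weakly convex and let $\{f_x\}_{x\in\mathbb{R}^d}$ be a two-sided model family with constant $q$. Fix $a\in(0,1)$, $\mu$ with $\mu^{-1}>\rho+q$, $\theta>q$, $x_0\in\mathbb{R}^d$, and define $$x_{k+1}=\operatorname{argmin}_{x\in\mathbb{R}^d}\Big\{f_{x_k}(x)+\frac{1+\theta\mu}{2\mu}\Big\|x-\frac{x_0+\theta\mu x_k}{1+\theta\mu}\Big\|^2\Big\},\quad k\ge0.$$ If $K\ge2\log(a^{-1})\big/\log\big(\frac{\mu^{-1}-\rho+\theta}{q+\theta}\big)$, then $\|x_K-\mathrm{prox}_{\mu f}(x_0)\|\le a\|x_0-\mathrm{prox}_{\mu f}(x_0)\|$.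
   Context: Two-sided model family: for each $x\in\mathbb{R}^d$, $f_x\colon\mathbb{R}^d\to\mathbb{R}\cup\{+\infty\}$ is closed and $\rho$-weakly convex (i.e. $f_x+\frac\rho2\|\cdot\|^2$ is convex) and satisfies $|f_x(y)-f(y)|\le\frac q2\|y-x\|^2$ for all $y\in\mathbb{R}^d$. $\mathrm{prox}_{\mu f}(x)=\operatorname{argmin}_y\{f(y)+\frac1{2\mu}\|y-x\|^2\}$. *)

theory Defs
  imports "HOL-Analysis.Analysis"
begin

text \<open>Extended-real-valued functions on a Euclidean space model
  functions into R \<union> {+\<infinity>}; the value -\<infinity> is excluded explicitly.\<close>

definition closed_fun :: "('a::euclidean_space \<Rightarrow> ereal) \<Rightarrow> bool" where
  "closed_fun g \<longleftrightarrow> closed {(y, t::real). g y \<le> ereal t}"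

definition weakly_convex :: "real \<Rightarrow> ('a::euclidean_space \<Rightarrow> ereal) \<Rightarrow> bool" where
  "weakly_convex \<rho> g \<longleftrightarrow>
     (\<forall>y. g y \<noteq> -\<infinity>) \<and>
     (\<forall>x y t. 0 \<le> t \<and> t \<le> 1 \<longrightarrow>
        g ((1 - t) *\<^sub>R x + t *\<^sub>R y) + ereal (\<rho> / 2 * (norm ((1 - t) *\<^sub>R x + t *\<^sub>R y))\<^sup>2)
        \<le> ereal (1 - t) * (g x + ereal (\<rho> / 2 * (norm x)\<^sup>2))
          + ereal t * (g y + ereal (\<rho> / 2 * (norm y)\<^sup>2)))"

definition two_sided_model :: "real \<Rightarrow> real \<Rightarrow> ('a::euclidean_space \<Rightarrow> ereal) \<Rightarrow> ('a \<Rightarrow> 'a \<Rightarrow> ereal) \<Rightarrow> bool" where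
  "two_sided_model \<rho> q f fm \<longleftrightarrow>
     (\<forall>x. closed_fun (fm x) \<and> weakly_convex \<rho> (fm x)) \<and>
     (\<forall>x y. fm x y \<le> f y + ereal (q / 2 * (norm (y - x))\<^sup>2) \<and>
            f y \<le> fm x y + ereal (q / 2 * (norm (y - x))\<^sup>2))"

definition prox :: "real \<Rightarrow> ('a::euclidean_space \<Rightarrow> ereal) \<Rightarrow> 'a \<Rightarrow> 'a" where
  "prox \<mu> g x = (SOME p. \<forall>y. g p + ereal (1 / (2 * \<mu>) * (norm (p - x))\<^sup>2)
                              \<le> g y + ereal (1 / (2 * \<mu>) * (norm (y - x))\<^sup>2))"

end

theory Submission
  imports Defs
begin

lemma norm_convex_id:
  fixes x y c :: "'a::real_inner"
  shows "(norm ((1 - t) *\<^sub>R x + t *\<^sub>R y - c))\<^sup>2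
       = (1 - t) * (norm (x - c))\<^sup>2 + t * (norm (y - c))\<^sup>2 - t * (1 - t) * (norm (x - y))\<^sup>2"
proof -
  have g: "\<And>a b::'a. (norm ((1 - t) *\<^sub>R a + t *\<^sub>R b))\<^sup>2
       = (1 - t) * (norm a)\<^sup>2 + t * (norm b)\<^sup>2 - t * (1 - t) * (norm (a - b))\<^sup>2"
    by (simp add: power2_norm_eq_inner inner_simps inner_commute algebra_simps)
  have e: "(1 - t) *\<^sub>R x + t *\<^sub>R y - c = (1 - t) *\<^sub>R (x - c) + t *\<^sub>R (y - c)"
    by (simp add: algebra_simps)
  have e2: "x - y = (x - c) - (y - c)" by simp
  show ?thesis
    using g[of "x - c" "y - c"] by (simp only: e e2)
qed

lemma norm_center_id:
  fixes z u v c :: "'a::real_inner"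
  assumes "(\<beta> + \<gamma>) *\<^sub>R c = \<beta> *\<^sub>R u + \<gamma> *\<^sub>R v"
  shows "\<beta> * (norm (z - u))\<^sup>2 + \<gamma> * (norm (z - v))\<^sup>2
       = (\<beta> + \<gamma>) * (norm (z - c))\<^sup>2 + \<beta> * (norm (u - c))\<^sup>2 + \<gamma> * (norm (v - c))\<^sup>2"
proof -
  have e1: "z - u = (z - c) - (u - c)" and e2: "z - v = (z - c) - (v - c)" by simp_all
  have i: "inner (z - c) ((\<beta> + \<gamma>) *\<^sub>R c) = inner (z - c) (\<beta> *\<^sub>R u + \<gamma> *\<^sub>R v)"
    using assms by simp
  have "\<beta> * (norm (z - u))\<^sup>2 + \<gamma> * (norm (z - v))\<^sup>2
     = (\<beta> + \<gamma>) * (norm (z - c))\<^sup>2 + \<beta> * (norm (u - c))\<^sup>2 + \<gamma> * (norm (v - c))\<^sup>2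
       - 2 * (inner (z - c) (\<beta> *\<^sub>R u + \<gamma> *\<^sub>R v) - inner (z - c) ((\<beta> + \<gamma>) *\<^sub>R c))"
    unfolding e1 e2 by (simp add: power2_norm_eq_inner inner_simps inner_commute algebra_simps)
  then show ?thesis using i by simp
qed

definition lscs :: "('a::euclidean_space \<Rightarrow> ereal) \<Rightarrow> bool" where
  "lscs g \<longleftrightarrow> (\<forall>u p c L. u \<longlonglongrightarrow> p \<longrightarrow> c \<longlonglongrightarrow> L \<longrightarrow> (\<forall>n. g (u n) \<le> ereal (c n)) \<longrightarrow> g p \<le> ereal L)"

definition sconv :: "real \<Rightarrow> ('a::euclidean_space \<Rightarrow> ereal) \<Rightarrow> bool" where
  "sconv \<sigma> G \<longleftrightarrow> (\<forall>x y t. 0 \<le> t \<longrightarrow> t \<le> 1 \<longrightarrow> G x \<noteq> \<infinity> \<longrightarrow> G y \<noteq> \<infinity> \<longrightarrow>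
     G ((1 - t) *\<^sub>R x + t *\<^sub>R y) \<le> ereal ((1 - t) * real_of_ereal (G x) + t * real_of_ereal (G y)
        - \<sigma> / 2 * t * (1 - t) * (norm (x - y))\<^sup>2))"

lemma closed_fun_lscs:
  assumes "closed_fun g" shows "lscs g"
  unfolding lscs_def
proof (intro allI impI)
  fix u p and c :: "nat \<Rightarrow> real" and L
  assume u: "u \<longlonglongrightarrow> p" and c: "c \<longlonglongrightarrow> L" and le: "\<forall>n. g (u n) \<le> ereal (c n)"
  have cl: "closed {(y, t::real). g y \<le> ereal t}" using assms unfolding closed_fun_def .
  have "(\<lambda>n. (u n, c n)) \<longlonglongrightarrow> (p, L)" using u c by (rule tendsto_Pair)
  moreover have "\<And>n. (u n, c n) \<in> {(y, t::real). g y \<le> ereal t}" using le by simp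
  ultimately have "(p, L) \<in> {(y, t::real). g y \<le> ereal t}"
    by (rule closed_sequentially[OF cl, rotated])
  then show "g p \<le> ereal L" by simp
qed

lemma lscs_add:
  assumes "lscs g" "continuous_on UNIV h" "\<forall>y. g y \<noteq> -\<infinity>"
  shows "lscs (\<lambda>y. g y + ereal (h y))"
  unfolding lscs_def
proof (intro allI impI)
  fix u p and c :: "nat \<Rightarrow> real" and L
  assume u: "u \<longlonglongrightarrow> p" and c: "c \<longlonglongrightarrow> L" and le: "\<forall>n. g (u n) + ereal (h (u n)) \<le> ereal (c n)"
  have hu: "(\<lambda>n. h (u n)) \<longlonglongrightarrow> h p"
    by (rule continuous_on_tendsto_compose[OF assms(2) u]) auto
  have "(\<lambda>n. c n - h (u n)) \<longlonglongrightarrow> L - h p" using c hu by (intro tendsto_intros)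
  moreover have "\<forall>n. g (u n) \<le> ereal (c n - h (u n))"
  proof
    fix n
    have "g (u n) \<noteq> \<infinity>"
    proof
      assume "g (u n) = \<infinity>" with le[rule_format, of n] show False by simp
    qed
    then obtain r where "g (u n) = ereal r" using assms(3)[rule_format, of "u n"] by (cases "g (u n)") simp_all
    then show "g (u n) \<le> ereal (c n - h (u n))" using le[rule_format, of n] by simp
  qed
  ultimately have gp: "g p \<le> ereal (L - h p)"
    using assms(1)[unfolded lscs_def, rule_format, OF u] by blast
  have "g p \<noteq> -\<infinity>" using assms(3) by blast
  then obtain r where r: "g p = ereal r" using gp by (cases "g p") auto
  show "g p + ereal (h p) \<le> ereal L"
    using gp unfolding r by simp
qed

lemma ring_aux:
  fixes a b X Y D r t :: real
  shows "(1 - t) * (a + r / 2 * X) + t * (b + r / 2 * Y) - r / 2 * ((1 - t) * X + t * Y - t * (1 - t) * D)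
       = (1 - t) * a + t * b + r / 2 * t * (1 - t) * D"
  by (simp add: field_simps)

lemma ring_aux2:
  fixes a b X Y D r t al :: real
  shows "(1 - t) * (a + al * X) + t * (b + al * Y) - (2 * al - r) / 2 * t * (1 - t) * D
        - al * ((1 - t) * X + t * Y - t * (1 - t) * D)
       = (1 - t) * a + t * b + r / 2 * t * (1 - t) * D"
  by (simp add: field_simps)

lemma wc_sconv:
  fixes g :: "'a::euclidean_space \<Rightarrow> ereal"
  assumes wc: "weakly_convex \<rho> g"
  shows "sconv (2 * \<alpha> - \<rho>) (\<lambda>z. g z + ereal (\<alpha> * (norm (z - c))\<^sup>2))"
  unfolding sconv_def
proof (intro allI impI)
  fix x y :: 'a and t :: real
  assume t0: "0 \<le> t" and t1: "t \<le> 1"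
    and fx: "g x + ereal (\<alpha> * (norm (x - c))\<^sup>2) \<noteq> \<infinity>"
    and fy: "g y + ereal (\<alpha> * (norm (y - c))\<^sup>2) \<noteq> \<infinity>"
  have nm: "\<And>z. g z \<noteq> -\<infinity>" using wc unfolding weakly_convex_def by blast
  have cv: "g ((1 - t) *\<^sub>R x + t *\<^sub>R y) + ereal (\<rho> / 2 * (norm ((1 - t) *\<^sub>R x + t *\<^sub>R y))\<^sup>2)
        \<le> ereal (1 - t) * (g x + ereal (\<rho> / 2 * (norm x)\<^sup>2))
          + ereal t * (g y + ereal (\<rho> / 2 * (norm y)\<^sup>2))"
    using wc t0 t1 unfolding weakly_convex_def by blast
  obtain gx where gx: "g x = ereal gx" using fx nm[of x] by (cases "g x") auto
  obtain gy where gy: "g y = ereal gy" using fy nm[of y] by (cases "g y") auto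
  define z where "z = (1 - t) *\<^sub>R x + t *\<^sub>R y"
  have cv2: "g z + ereal (\<rho> / 2 * (norm z)\<^sup>2)
      \<le> ereal ((1 - t) * (gx + \<rho> / 2 * (norm x)\<^sup>2) + t * (gy + \<rho> / 2 * (norm y)\<^sup>2))"
    using cv unfolding gx gy z_def by simp
  obtain gz where gz: "g z = ereal gz"
    using cv2 nm[of z] by (cases "g z") auto
  have r1: "gz + \<rho> / 2 * (norm z)\<^sup>2 \<le> (1 - t) * (gx + \<rho> / 2 * (norm x)\<^sup>2) + t * (gy + \<rho> / 2 * (norm y)\<^sup>2)"
    using cv2 unfolding gz by simp
  have i0: "(norm z)\<^sup>2 = (1 - t) * (norm x)\<^sup>2 + t * (norm y)\<^sup>2 - t * (1 - t) * (norm (x - y))\<^sup>2"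
    using norm_convex_id[of t x y 0] unfolding z_def by simp
  have ic: "(norm (z - c))\<^sup>2 = (1 - t) * (norm (x - c))\<^sup>2 + t * (norm (y - c))\<^sup>2 - t * (1 - t) * (norm (x - y))\<^sup>2"
    using norm_convex_id[of t x y c] unfolding z_def by simp
  have r2: "gz \<le> (1 - t) * gx + t * gy + \<rho> / 2 * t * (1 - t) * (norm (x - y))\<^sup>2"
  proof -
    have e: "(1 - t) * (gx + \<rho> / 2 * (norm x)\<^sup>2) + t * (gy + \<rho> / 2 * (norm y)\<^sup>2)
       - \<rho> / 2 * ((1 - t) * (norm x)\<^sup>2 + t * (norm y)\<^sup>2 - t * (1 - t) * (norm (x - y))\<^sup>2)
       = (1 - t) * gx + t * gy + \<rho> / 2 * t * (1 - t) * (norm (x - y))\<^sup>2"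
      by (rule ring_aux)
    show ?thesis using r1 e unfolding i0 by linarith
  qed
  have r3: "gz + \<alpha> * (norm (z - c))\<^sup>2 \<le> (1 - t) * (gx + \<alpha> * (norm (x - c))\<^sup>2) + t * (gy + \<alpha> * (norm (y - c))\<^sup>2)
        - (2 * \<alpha> - \<rho>) / 2 * t * (1 - t) * (norm (x - y))\<^sup>2"
  proof -
    have e: "(1 - t) * (gx + \<alpha> * (norm (x - c))\<^sup>2) + t * (gy + \<alpha> * (norm (y - c))\<^sup>2)
        - (2 * \<alpha> - \<rho>) / 2 * t * (1 - t) * (norm (x - y))\<^sup>2
        - \<alpha> * ((1 - t) * (norm (x - c))\<^sup>2 + t * (norm (y - c))\<^sup>2 - t * (1 - t) * (norm (x - y))\<^sup>2)
       = (1 - t) * gx + t * gy + \<rho> / 2 * t * (1 - t) * (norm (x - y))\<^sup>2"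
      by (rule ring_aux2)
    show ?thesis using r2 e unfolding ic by linarith
  qed
  show "g z + ereal (\<alpha> * (norm (z - c))\<^sup>2)
        \<le> ereal ((1 - t) * real_of_ereal (g x + ereal (\<alpha> * (norm (x - c))\<^sup>2)) +
                  t * real_of_ereal (g y + ereal (\<alpha> * (norm (y - c))\<^sup>2)) -
                  (2 * \<alpha> - \<rho>) / 2 * t * (1 - t) * (norm (x - y))\<^sup>2)"
    using r3 unfolding gx gy gz by simp
qed

lemma growth:
  fixes G :: "'a::euclidean_space \<Rightarrow> ereal"
  assumes sc: "sconv \<sigma> G" and nm: "\<And>y. G y \<noteq> -\<infinity>"
    and mn: "\<And>y. G p \<le> G y" and fz: "G z \<noteq> \<infinity>"
  shows "real_of_ereal (G p) + \<sigma> / 2 * (norm (z - p))\<^sup>2 \<le> real_of_ereal (G z)"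
proof -
  obtain gz where gz: "G z = ereal gz" using fz nm[of z] by (cases "G z") auto
  have fp: "G p \<noteq> \<infinity>" using mn[of z] fz by auto
  obtain gp where gp: "G p = ereal gp" using fp nm[of p] by (cases "G p") auto
  define A where "A = gz - gp"
  define B where "B = \<sigma> / 2 * (norm (z - p))\<^sup>2"
  have key: "(1 - t) * B \<le> A" if t: "0 < t" "t \<le> 1" for t
  proof -
    have "G p \<le> G ((1 - t) *\<^sub>R p + t *\<^sub>R z)" by (rule mn)
    also have "G ((1 - t) *\<^sub>R p + t *\<^sub>R z) \<le> ereal ((1 - t) * gp + t * gz - \<sigma> / 2 * t * (1 - t) * (norm (p - z))\<^sup>2)"
    proof -
      have "G ((1 - t) *\<^sub>R p + t *\<^sub>R z) \<le> ereal ((1 - t) * real_of_ereal (G p) + t * real_of_ereal (G z) - \<sigma> / 2 * t * (1 - t) * (norm (p - z))\<^sup>2)"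
        using sc[unfolded sconv_def, rule_format, of t p z] t fp fz by simp
      then show ?thesis unfolding gp gz by simp
    qed
    finally have "gp \<le> (1 - t) * gp + t * gz - \<sigma> / 2 * t * (1 - t) * (norm (p - z))\<^sup>2"
      unfolding gp by simp
    then have "t * ((1 - t) * B) \<le> t * A"
      unfolding A_def B_def by (simp add: norm_minus_commute algebra_simps)
    then show ?thesis using t by simp
  qed
  have "B \<le> A"
  proof (rule ccontr)
    assume "\<not> B \<le> A"
    then have BA: "A < B" by simp
    show False
    proof (cases "B \<le> 0")
      case True then show False using key[of 1] BA by simp
    next
      case False
      define t where "t = (B - A) / (2 * B)"
      have t0: "0 < t" using BA False unfolding t_def by simp
      have A0: "0 \<le> A" using key[of 1] by simp
      have t1: "t \<le> 1" using BA False A0 unfolding t_def by (simp add: field_simps)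
      have "(1 - t) * B \<le> A" using key[OF t0 t1] .
      moreover have "(1 - t) * B = (A + B) / 2" using False unfolding t_def by (simp add: field_simps)
      ultimately show False using BA by simp
    qed
  qed
  then show ?thesis unfolding A_def B_def gp gz by simp
qed

lemma exists_min:
  fixes g :: "'a::euclidean_space \<Rightarrow> ereal"
  assumes lsc: "lscs g" and nm: "\<And>y. g y \<noteq> -\<infinity>" and fin: "g p0 \<noteq> \<infinity>"
    and sc: "sconv \<sigma> g" and sp: "\<sigma> > 0"
  shows "\<exists>p. \<forall>y. g p \<le> g y"
proof -
  obtain c0 where c0: "g p0 = ereal c0" using fin nm[of p0] by (cases "g p0") auto
  have "\<exists>r>0. \<forall>w. norm (w - p0) < r \<longrightarrow> ereal (c0 - 1) < g w"
  proof (rule ccontr)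
    assume na: "\<not> (\<exists>r>0. \<forall>w. norm (w - p0) < r \<longrightarrow> ereal (c0 - 1) < g w)"
    have "\<exists>w. norm (w - p0) < 1 / real (Suc n) \<and> g w \<le> ereal (c0 - 1)" for n
    proof -
      have "(1::real) / real (Suc n) > 0" by simp
      then obtain w where "norm (w - p0) < 1 / real (Suc n)" "\<not> ereal (c0 - 1) < g w"
        using na by blast
      then show ?thesis by (auto simp: not_less)
    qed
    then obtain w where w1: "\<And>n. norm (w n - p0) < 1 / real (Suc n)"
      and w2: "\<And>n. g (w n) \<le> ereal (c0 - 1)" by metis
    have "(\<lambda>n. w n - p0) \<longlonglongrightarrow> 0" using w1 by (rule LIMSEQ_norm_0)
    then have wl: "w \<longlonglongrightarrow> p0" by (rule LIM_zero_cancel)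
    have "g p0 \<le> ereal (c0 - 1)"
      using lsc[unfolded lscs_def, rule_format, OF wl tendsto_const] w2 by blast
    then show False unfolding c0 by simp
  qed
  then obtain r where r0: "r > 0" and r: "\<And>w. norm (w - p0) < r \<Longrightarrow> ereal (c0 - 1) < g w" by blast
  define B where "B = c0 - 1 - 4 / (\<sigma> * r\<^sup>2)"
  have lb: "ereal B \<le> g v" for v
  proof (cases "g v = \<infinity>")
    case True then show ?thesis by simp
  next
    case False
    then obtain gv where gv: "g v = ereal gv" using nm[of v] by (cases "g v") auto
    define d where "d = norm (v - p0)"
    have q0: "4 / (\<sigma> * r\<^sup>2) \<ge> 0" using sp r0 by simp
    show ?thesis
    proof (cases "d < r")
      case True then have "ereal (c0 - 1) < g v" using r d_def by simp
      then have "c0 - 1 < gv" unfolding gv by simp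
      then have "B \<le> gv" unfolding B_def using q0 by linarith
      then show ?thesis unfolding gv by simp
    next
      case False
      then have dr: "d \<ge> r" and dpos: "d > 0" using r0 by auto
      define t where "t = r / (2 * d)"
      have t0: "0 < t" using dpos r0 unfolding t_def by simp
      have t1: "t \<le> 1 / 2" using dr dpos r0 unfolding t_def by (simp add: field_simps)
      define w where "w = (1 - t) *\<^sub>R p0 + t *\<^sub>R v"
      have "w - p0 = t *\<^sub>R (v - p0)" unfolding w_def by (simp add: algebra_simps)
      then have "norm (w - p0) = t * d" using t0 unfolding d_def by simp
      also have "\<dots> = r / 2" using dpos unfolding t_def by simp
      finally have "norm (w - p0) < r" using r0 by simp
      then have gw: "ereal (c0 - 1) < g w" by (rule r)
      have "g w \<le> ereal ((1 - t) * real_of_ereal (g p0) + t * real_of_ereal (g v) - \<sigma> / 2 * t * (1 - t) * (norm (p0 - v))\<^sup>2)"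
        unfolding w_def using sc[unfolded sconv_def, rule_format, of t p0 v] t0 t1 fin gv by simp
      with gw have "ereal (c0 - 1) < ereal ((1 - t) * real_of_ereal (g p0) + t * real_of_ereal (g v) - \<sigma> / 2 * t * (1 - t) * (norm (p0 - v))\<^sup>2)"
        by (rule less_le_trans)
      then have h1: "c0 - 1 < (1 - t) * c0 + t * gv - \<sigma> / 2 * t * (1 - t) * d\<^sup>2"
        unfolding c0 gv d_def by (simp add: norm_minus_commute)
      have h2: "\<sigma> / 4 * t * d\<^sup>2 \<le> \<sigma> / 2 * t * (1 - t) * d\<^sup>2"
      proof -
        have "1 / 2 \<le> 1 - t" using t1 by simp
        moreover have "0 \<le> \<sigma> * t * d\<^sup>2" using sp t0 by simp
        ultimately have "\<sigma> * t * d\<^sup>2 * (1/2) \<le> \<sigma> * t * d\<^sup>2 * (1 - t)" by (rule mult_left_mono)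
        then show ?thesis by (simp add: algebra_simps)
      qed
      have h3: "t * (c0 - 1 / t + \<sigma> / 4 * d\<^sup>2) < t * gv"
      proof -
        have e: "t * (c0 - 1 / t + \<sigma> / 4 * d\<^sup>2) = t * c0 - 1 + \<sigma> / 4 * t * d\<^sup>2"
          using t0 by (simp add: field_simps)
        have e2: "(1 - t) * c0 = c0 - t * c0" by (simp add: algebra_simps)
        show ?thesis using h1 h2 unfolding e e2 by (simp add: mult.commute)
      qed
      have h4: "c0 - 1 / t + \<sigma> / 4 * d\<^sup>2 < gv" using h3 t0 by simp
      have it: "1 / t = 2 * d / r" unfolding t_def by simp
      have h5: "\<sigma> / 4 * d\<^sup>2 - 2 * d / r + 4 / (\<sigma> * r\<^sup>2) = \<sigma> / 4 * (d - 4 / (\<sigma> * r))\<^sup>2"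
        using sp r0 by (simp add: field_simps power2_eq_square)
      have h6: "0 \<le> \<sigma> / 4 * (d - 4 / (\<sigma> * r))\<^sup>2" using sp by simp
      have "B < gv" using h4 h5 h6 unfolding it B_def by linarith
      then show ?thesis unfolding gv by simp
    qed
  qed
  define m where "m = Inf (range g)"
  have mB: "ereal B \<le> m" unfolding m_def by (rule Inf_greatest) (auto intro: lb)
  have mp0: "m \<le> g p0" unfolding m_def by (rule Inf_lower) simp
  obtain mr where mr: "m = ereal mr" using mB mp0 fin by (cases m) auto
  have "\<exists>u. g u < ereal (mr + inverse (real (Suc n)))" for n
  proof -
    have "m < ereal (mr + inverse (real (Suc n)))" unfolding mr by simp
    then show ?thesis unfolding m_def Inf_less_iff by auto
  qed
  then obtain u where u: "\<And>n. g (u n) < ereal (mr + inverse (real (Suc n)))" by metis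
  have gum: "\<And>y. m \<le> g y" unfolding m_def by (rule Inf_lower) simp
  define a where "a n = real_of_ereal (g (u n))" for n
  have ga: "g (u n) = ereal (a n)" for n
    using u[of n] nm[of "u n"] unfolding a_def by (cases "g (u n)") auto
  have amr: "mr \<le> a n" for n using gum[of "u n"] unfolding ga mr by simp
  have amr2: "a n < mr + inverse (real (Suc n))" for n using u[of n] unfolding ga by simp
  have dist: "(norm (u n - u k))\<^sup>2 < 4 / \<sigma> * (inverse (real (Suc n)) + inverse (real (Suc k)))" for n k
  proof -
    have "g ((1 - 1/2) *\<^sub>R u n + (1/2) *\<^sub>R u k) \<le> ereal ((1 - 1/2) * real_of_ereal (g (u n)) + (1/2) * real_of_ereal (g (u k)) - \<sigma> / 2 * (1/2) * (1 - 1/2) * (norm (u n - u k))\<^sup>2)"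
      using sc[unfolded sconv_def, rule_format, of "1/2" "u n" "u k"] ga by simp
    moreover have "m \<le> g ((1 - 1/2) *\<^sub>R u n + (1/2) *\<^sub>R u k)" by (rule gum)
    ultimately have "mr \<le> (1 - 1/2) * a n + (1/2) * a k - \<sigma> / 2 * (1/2) * (1 - 1/2) * (norm (u n - u k))\<^sup>2"
      unfolding mr a_def[symmetric] using order_trans by fastforce
    then have "\<sigma> / 8 * (norm (u n - u k))\<^sup>2 < (inverse (real (Suc n)) + inverse (real (Suc k))) / 2"
      using amr2[of n] amr2[of k] by simp
    then have "\<sigma> * (norm (u n - u k))\<^sup>2 < 4 * (inverse (real (Suc n)) + inverse (real (Suc k)))"
      by simp
    then have "(norm (u n - u k))\<^sup>2 * \<sigma> < 4 * (inverse (real (Suc n)) + inverse (real (Suc k)))"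
      by (simp add: mult.commute)
    then have "(norm (u n - u k))\<^sup>2 < 4 * (inverse (real (Suc n)) + inverse (real (Suc k))) / \<sigma>"
      using sp by (simp only: pos_less_divide_eq)
    then show ?thesis by simp
  qed
  have "Cauchy u"
  proof (rule CauchyI)
    fix e :: real assume e: "0 < e"
    have "0 < \<sigma> * e\<^sup>2 / 8" using e sp by simp
    then obtain M where M: "inverse (real (Suc M)) < \<sigma> * e\<^sup>2 / 8"
      using reals_Archimedean by blast
    have "norm (u n - u k) < e" if "n \<ge> M" "k \<ge> M" for n k
    proof -
      have "inverse (real (Suc n)) \<le> inverse (real (Suc M))" using that by (simp add: field_simps)
      moreover have "inverse (real (Suc k)) \<le> inverse (real (Suc M))" using that by (simp add: field_simps)
      ultimately have "inverse (real (Suc n)) + inverse (real (Suc k)) \<le> 2 * inverse (real (Suc M))"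
        by linarith
      moreover have "0 \<le> 4 / \<sigma>" using sp by simp
      ultimately have "4 / \<sigma> * (inverse (real (Suc n)) + inverse (real (Suc k))) \<le> 4 / \<sigma> * (2 * inverse (real (Suc M)))"
        by (rule mult_left_mono)
      also have "\<dots> < 4 / \<sigma> * (2 * (\<sigma> * e\<^sup>2 / 8))" 
      proof (rule mult_strict_left_mono)
        show "2 * inverse (real (Suc M)) < 2 * (\<sigma> * e\<^sup>2 / 8)" using M by simp
        show "0 < 4 / \<sigma>" using sp by simp
      qed
      also have "\<dots> = e\<^sup>2" using sp by simp
      finally have "(norm (u n - u k))\<^sup>2 < e\<^sup>2" using dist[of n k] by linarith
      then show ?thesis using e by (simp add: power_less_imp_less_base)
    qed
    then show "\<exists>M. \<forall>m\<ge>M. \<forall>n\<ge>M. norm (u m - u n) < e" by blast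
  qed
  then obtain p where up: "u \<longlonglongrightarrow> p" unfolding Cauchy_convergent_iff convergent_def by blast
  have cl: "(\<lambda>n. mr + inverse (real (Suc n))) \<longlonglongrightarrow> mr"
    using tendsto_add[OF tendsto_const LIMSEQ_inverse_real_of_nat, of mr] by simp
  have "g p \<le> ereal mr"
    using lsc[unfolded lscs_def, rule_format, OF up cl] u less_imp_le by blast
  then have "\<forall>y. g p \<le> g y" using gum unfolding mr using order_trans by blast
  then show ?thesis by blast
qed

lemma combine_aux:
  fixes Ms M1 Fs F1 As A1 Ps P1 Qs Q1 K D \<alpha> \<beta> \<gamma> q \<sigma> \<theta> :: real
  assumes "M1 + \<alpha>*A1 + \<sigma>/2*D \<le> Ms + \<alpha>*As"
   "Ms \<le> Fs + q/2*Qs" "F1 \<le> M1 + q/2*Q1" "Fs + \<beta>*Ps \<le> F1 + \<beta>*P1"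
   "\<beta>*Ps + \<gamma>*Qs = \<alpha>*As + K" "\<beta>*P1 + \<gamma>*Q1 = \<alpha>*A1 + K" "\<gamma> = \<theta>/2" "q \<le> \<theta>" "0 \<le> Q1"
  shows "\<sigma>/2*D \<le> (q+\<theta>)/2*Qs"
proof -
  have h1: "(q+\<theta>)/2*Qs = q/2*Qs + \<theta>/2*Qs" by (simp add: algebra_simps)
  have h2: "0 \<le> \<theta>/2*Q1 - q/2*Q1"
  proof -
    have "0 \<le> (\<theta> - q)/2*Q1" using assms(8,9) by simp
    then show ?thesis by (simp add: algebra_simps)
  qed
  show ?thesis using assms(1-6) h1 h2 unfolding assms(7) by linarith
qed

lemma model_lscs:
  fixes f :: "'a::euclidean_space \<Rightarrow> ereal"
  assumes model: "two_sided_model \<rho> q f fm"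
  shows "lscs f"
  unfolding lscs_def
proof (intro allI impI)
  fix u p and c :: "nat \<Rightarrow> real" and L
  assume u: "u \<longlonglongrightarrow> p" and c: "c \<longlonglongrightarrow> L" and le: "\<forall>n. f (u n) \<le> ereal (c n)"
  have cl: "lscs (fm p)" using model unfolding two_sided_model_def by (blast intro: closed_fun_lscs)
  have up: "\<And>x y. fm x y \<le> f y + ereal (q / 2 * (norm (y - x))\<^sup>2)"
    and lo: "\<And>x y. f y \<le> fm x y + ereal (q / 2 * (norm (y - x))\<^sup>2)"
    using model unfolding two_sided_model_def by blast+
  have b: "fm p (u n) \<le> ereal (c n + q / 2 * (norm (u n - p))\<^sup>2)" for n
  proof -
    have "fm p (u n) \<le> f (u n) + ereal (q / 2 * (norm (u n - p))\<^sup>2)" by (rule up)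
    also have "\<dots> \<le> ereal (c n) + ereal (q / 2 * (norm (u n - p))\<^sup>2)"
      using le by (intro add_right_mono) blast
    finally show ?thesis by simp
  qed
  have "(\<lambda>n. c n + q / 2 * (norm (u n - p))\<^sup>2) \<longlonglongrightarrow> L + q / 2 * (norm (p - p))\<^sup>2"
    using c u by (intro tendsto_intros)
  then have cl2: "(\<lambda>n. c n + q / 2 * (norm (u n - p))\<^sup>2) \<longlonglongrightarrow> L" by simp
  have "fm p p \<le> ereal L"
    using cl[unfolded lscs_def, rule_format, OF u cl2] b by blast
  moreover have "f p \<le> fm p p" using lo[of p p] by simp
  ultimately show "f p \<le> ereal L" by (rule order_trans[rotated])
qed

theorem mainTheorem9:
  fixes f :: "'a::euclidean_space \<Rightarrow> ereal"
    and fm :: "'a \<Rightarrow> 'a \<Rightarrow> ereal"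
    and \<rho> q a \<mu> \<theta> :: real
    and x :: "nat \<Rightarrow> 'a"
    and K :: nat
  assumes wc: "weakly_convex \<rho> f"
    and proper: "\<exists>y. f y \<noteq> \<infinity>"
    and model: "two_sided_model \<rho> q f fm"
    and a: "0 < a" "a < 1"
    and mu_pos: "0 < \<mu>"
    and mu: "1 / \<mu> > \<rho> + q"
    and theta: "\<theta> > q"
    and step: "\<And>k. \<forall>z. fm (x k) (x (Suc k))
                 + ereal ((1 + \<theta> * \<mu>) / (2 * \<mu>)
                     * (norm (x (Suc k) - (1 / (1 + \<theta> * \<mu>)) *\<^sub>R (x 0 + (\<theta> * \<mu>) *\<^sub>R x k)))\<^sup>2)
               \<le> fm (x k) z
                 + ereal ((1 + \<theta> * \<mu>) / (2 * \<mu>)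
                     * (norm (z - (1 / (1 + \<theta> * \<mu>)) *\<^sub>R (x 0 + (\<theta> * \<mu>) *\<^sub>R x k)))\<^sup>2)"
    and K: "real K \<ge> 2 * ln (1 / a) / ln ((1 / \<mu> - \<rho> + \<theta>) / (q + \<theta>))"
  shows "norm (x K - prox \<mu> f (x 0)) \<le> a * norm (x 0 - prox \<mu> f (x 0))"
proof -
  have nmf: "\<And>y. f y \<noteq> -\<infinity>" using wc unfolding weakly_convex_def by blast
  have wcm: "\<And>z. weakly_convex \<rho> (fm z)" using model unfolding two_sided_model_def by blast
  have nmm: "\<And>z y. fm z y \<noteq> -\<infinity>" using wcm unfolding weakly_convex_def by blast
  have up: "\<And>x y. fm x y \<le> f y + ereal (q / 2 * (norm (y - x))\<^sup>2)"
    and lo: "\<And>x y. f y \<le> fm x y + ereal (q / 2 * (norm (y - x))\<^sup>2)"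
    using model unfolding two_sided_model_def by blast+
  obtain y0 where fy0: "f y0 \<noteq> \<infinity>" using proper by blast
  obtain r0 where r0: "f y0 = ereal r0" using fy0 nmf[of y0] by (cases "f y0") auto
  have q0: "0 \<le> q"
  proof -
    obtain e :: 'a where e: "e \<in> Basis" using nonempty_Basis by blast
    have ne: "norm e = 1" using e by simp
    define x' where "x' = y0 + e"
    have nx: "norm (y0 - x') = 1" unfolding x'_def using ne by simp
    have "fm x' y0 \<le> ereal (r0 + q / 2)" using up[of x' y0] unfolding r0 nx by simp
    then obtain s where s: "fm x' y0 = ereal s" using nmm[of x' y0] by (cases "fm x' y0") auto
    have "s \<le> r0 + q / 2" using up[of x' y0] unfolding r0 nx s by simp
    moreover have "r0 \<le> s + q / 2" using lo[of y0 x'] unfolding r0 nx s by simp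
    ultimately show ?thesis by simp
  qed
  have sig0: "0 < 2 * (1 / (2 * \<mu>)) - \<rho>" using mu q0 mu_pos by simp
  define \<phi> where "\<phi> y = f y + ereal (1 / (2 * \<mu>) * (norm (y - x 0))\<^sup>2)" for y
  have sc\<phi>: "sconv (2 * (1 / (2 * \<mu>)) - \<rho>) \<phi>" unfolding \<phi>_def by (rule wc_sconv[OF wc])
  have ls\<phi>: "lscs \<phi>" unfolding \<phi>_def
    by (rule lscs_add[OF model_lscs[OF model]]) (use mu_pos in \<open>auto intro!: continuous_intros simp: nmf\<close>)
  have nm\<phi>: "\<And>y. \<phi> y \<noteq> -\<infinity>" unfolding \<phi>_def using nmf by simp
  have f\<phi>: "\<phi> y0 \<noteq> \<infinity>" unfolding \<phi>_def r0 by simp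
  have "\<exists>p. \<forall>y. \<phi> p \<le> \<phi> y" by (rule exists_min[OF ls\<phi> nm\<phi> f\<phi> sc\<phi> sig0])
  then have "\<exists>p. \<forall>y. f p + ereal (1 / (2 * \<mu>) * (norm (p - x 0))\<^sup>2)
                              \<le> f y + ereal (1 / (2 * \<mu>) * (norm (y - x 0))\<^sup>2)"
    unfolding \<phi>_def .
  then have "\<forall>y. f (prox \<mu> f (x 0)) + ereal (1 / (2 * \<mu>) * (norm (prox \<mu> f (x 0) - x 0))\<^sup>2)
                              \<le> f y + ereal (1 / (2 * \<mu>) * (norm (y - x 0))\<^sup>2)"
    unfolding prox_def by (rule someI_ex)
  moreover define xs where "xs = prox \<mu> f (x 0)"
  ultimately have xsmin: "\<And>y. f xs + ereal (1 / (2 * \<mu>) * (norm (xs - x 0))\<^sup>2)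
                              \<le> f y + ereal (1 / (2 * \<mu>) * (norm (y - x 0))\<^sup>2)" by blast
  have "f xs \<noteq> \<infinity>" using xsmin[of y0] unfolding r0 by auto
  then obtain fxs where fxs: "f xs = ereal fxs" using nmf[of xs] by (cases "f xs") auto
  have tq: "0 < q + \<theta>" using q0 theta by simp
  define S where "S = 1 / \<mu> - \<rho> + \<theta>"
  have Sq: "q + \<theta> < S" unfolding S_def using mu by simp
  define L where "L = (q + \<theta>) / S"
  have L0: "0 < L" and L1: "L < 1" unfolding L_def using tq Sq by auto
  have contr: "(norm (x (Suc k) - xs))\<^sup>2 \<le> L * (norm (x k - xs))\<^sup>2" for k
  proof -
    define c where "c = (1 / (1 + \<theta> * \<mu>)) *\<^sub>R (x 0 + (\<theta> * \<mu>) *\<^sub>R x k)"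
    define \<alpha> where "\<alpha> = (1 + \<theta> * \<mu>) / (2 * \<mu>)"
    define G where "G z = fm (x k) z + ereal (\<alpha> * (norm (z - c))\<^sup>2)" for z
    define x1 where "x1 = x (Suc k)"
    have tm: "0 < 1 + \<theta> * \<mu>"
    proof -
      have "0 \<le> \<theta>" using q0 theta by simp
      then have "0 \<le> \<theta> * \<mu>" using mu_pos by simp
      then show ?thesis by simp
    qed
    have scG: "sconv (2 * \<alpha> - \<rho>) G" unfolding G_def by (rule wc_sconv[OF wcm])
    have nmG: "\<And>y. G y \<noteq> -\<infinity>" unfolding G_def using nmm by simp
    have mnG: "\<And>y. G x1 \<le> G y" unfolding G_def x1_def \<alpha>_def c_def using step[of k] by blast
    have "fm (x k) xs \<le> ereal (fxs + q / 2 * (norm (xs - x k))\<^sup>2)" using up[of "x k" xs] unfolding fxs by simp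
    then obtain Ms where Ms: "fm (x k) xs = ereal Ms" using nmm[of "x k" xs] by (cases "fm (x k) xs") auto
    have Ms_le: "Ms \<le> fxs + q / 2 * (norm (xs - x k))\<^sup>2" using up[of "x k" xs] unfolding fxs Ms by simp
    have fGs: "G xs \<noteq> \<infinity>" unfolding G_def Ms by simp
    have "G x1 \<noteq> \<infinity>" using mnG[of xs] fGs by auto
    then obtain M1 where M1: "fm (x k) x1 = ereal M1" using nmm[of "x k" x1] unfolding G_def by (cases "fm (x k) x1") auto
    have "f x1 \<le> ereal (M1 + q / 2 * (norm (x1 - x k))\<^sup>2)" using lo[of x1 "x k"] unfolding M1 by simp
    then obtain F1 where F1: "f x1 = ereal F1" using nmf[of x1] by (cases "f x1") auto
    have F1_le: "F1 \<le> M1 + q / 2 * (norm (x1 - x k))\<^sup>2" using lo[of x1 "x k"] unfolding M1 F1 by simp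
    have gr: "real_of_ereal (G x1) + (2 * \<alpha> - \<rho>) / 2 * (norm (xs - x1))\<^sup>2 \<le> real_of_ereal (G xs)"
      by (rule growth[OF scG nmG mnG fGs])
    have g1: "M1 + \<alpha> * (norm (x1 - c))\<^sup>2 + (2 * \<alpha> - \<rho>) / 2 * (norm (xs - x1))\<^sup>2 \<le> Ms + \<alpha> * (norm (xs - c))\<^sup>2"
      using gr unfolding G_def M1 Ms by simp
    have mn2: "fxs + 1 / (2 * \<mu>) * (norm (xs - x 0))\<^sup>2 \<le> F1 + 1 / (2 * \<mu>) * (norm (x1 - x 0))\<^sup>2"
      using xsmin[of x1] unfolding fxs F1 by simp
    have cc: "(1 / (2 * \<mu>) + \<theta> / 2) *\<^sub>R c = (1 / (2 * \<mu>)) *\<^sub>R x 0 + (\<theta> / 2) *\<^sub>R x k"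
    proof -
      have e1: "(1 / (2 * \<mu>) + \<theta> / 2) * (1 / (1 + \<theta> * \<mu>)) = 1 / (2 * \<mu>)"
        using tm mu_pos by (simp add: field_simps)
      have e2: "1 / (2 * \<mu>) * (\<theta> * \<mu>) = \<theta> / 2" using mu_pos by (simp add: field_simps)
      have "(1 / (2 * \<mu>) + \<theta> / 2) *\<^sub>R c = (1 / (2 * \<mu>)) *\<^sub>R (x 0 + (\<theta> * \<mu>) *\<^sub>R x k)"
        unfolding c_def scaleR_scaleR e1 ..
      also have "\<dots> = (1 / (2 * \<mu>)) *\<^sub>R x 0 + (\<theta> / 2) *\<^sub>R x k"
        unfolding scaleR_add_right scaleR_scaleR e2 ..
      finally show ?thesis .
    qed
    have al: "\<alpha> = 1 / (2 * \<mu>) + \<theta> / 2" unfolding \<alpha>_def using mu_pos by (simp add: field_simps)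
    have id1: "1 / (2 * \<mu>) * (norm (xs - x 0))\<^sup>2 + \<theta> / 2 * (norm (xs - x k))\<^sup>2
       = \<alpha> * (norm (xs - c))\<^sup>2 + (1 / (2 * \<mu>) * (norm (x 0 - c))\<^sup>2 + \<theta> / 2 * (norm (x k - c))\<^sup>2)"
      using norm_center_id[OF cc, of xs] unfolding al by simp
    have id2: "1 / (2 * \<mu>) * (norm (x1 - x 0))\<^sup>2 + \<theta> / 2 * (norm (x1 - x k))\<^sup>2
       = \<alpha> * (norm (x1 - c))\<^sup>2 + (1 / (2 * \<mu>) * (norm (x 0 - c))\<^sup>2 + \<theta> / 2 * (norm (x k - c))\<^sup>2)"
      using norm_center_id[OF cc, of x1] unfolding al by simp
    have "(2 * \<alpha> - \<rho>) / 2 * (norm (xs - x1))\<^sup>2 \<le> (q + \<theta>) / 2 * (norm (xs - x k))\<^sup>2"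
      by (rule combine_aux[OF g1 Ms_le F1_le mn2 id1 id2 refl]) (use theta in simp_all)
    moreover have "2 * \<alpha> - \<rho> = S" unfolding al S_def using mu_pos by (simp add: field_simps)
    ultimately have "S / 2 * (norm (x1 - xs))\<^sup>2 \<le> (q + \<theta>) / 2 * (norm (x k - xs))\<^sup>2"
      by (simp add: norm_minus_commute)
    then have "S * (norm (x1 - xs))\<^sup>2 \<le> (q + \<theta>) * (norm (x k - xs))\<^sup>2" by simp
    then have "(norm (x1 - xs))\<^sup>2 \<le> (q + \<theta>) * (norm (x k - xs))\<^sup>2 / S"
      using Sq tq by (simp add: pos_le_divide_eq mult.commute)
    then show ?thesis unfolding L_def x1_def by simp
  qed
  have pw: "(norm (x k - xs))\<^sup>2 \<le> L ^ k * (norm (x 0 - xs))\<^sup>2" for k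
  proof (induction k)
    case 0 then show ?case by simp
  next
    case (Suc k)
    have "(norm (x (Suc k) - xs))\<^sup>2 \<le> L * (norm (x k - xs))\<^sup>2" by (rule contr)
    also have "\<dots> \<le> L * (L ^ k * (norm (x 0 - xs))\<^sup>2)" using Suc L0 by (simp add: mult_left_mono)
    finally show ?case by simp
  qed
  have LK: "L ^ K \<le> a\<^sup>2"
  proof -
    have lnS: "0 < ln (S / (q + \<theta>))" using Sq tq by simp
    have K': "2 * ln (1 / a) / ln (S / (q + \<theta>)) \<le> real K" using K unfolding S_def .
    then have "2 * ln (1 / a) \<le> real K * ln (S / (q + \<theta>))"
      using pos_divide_le_eq[OF lnS] by blast
    moreover have "ln (S / (q + \<theta>)) = - ln L" unfolding L_def using Sq tq by (simp add: ln_div)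
    moreover have "ln (1 / a) = - ln a" using a by (simp add: ln_div)
    ultimately have "real K * ln L \<le> 2 * ln a" by simp
    then have "ln (L ^ K) \<le> ln (a\<^sup>2)" using L0 a by (simp add: ln_realpow)
    then show ?thesis using L0 a by simp
  qed
  have "(norm (x K - xs))\<^sup>2 \<le> a\<^sup>2 * (norm (x 0 - xs))\<^sup>2"
    using pw[of K] LK by (meson mult_right_mono order_trans zero_le_power2)
  also have "\<dots> = (a * norm (x 0 - xs))\<^sup>2" by (simp add: power_mult_distrib)
  finally have "(norm (x K - xs))\<^sup>2 \<le> (a * norm (x 0 - xs))\<^sup>2" .
  then have "norm (x K - xs) \<le> a * norm (x 0 - xs)"
    by (rule power2_le_imp_le) (use a in simp)
  then show ?thesis unfolding xs_def .
qed

end
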